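(* For each $\gamma\in\Gamma$, $$\sum_{n\ge1}\sum_{\theta\in\Gamma}m^n(\gamma,\theta)\le\sum_{n\ge1}|\gamma|\,\beta(V,\alpha)^n,$$ where $m^n$ is the $n$-th power of the matrix $m(\gamma,\theta)=w(\theta)\mathbf 1\{\gamma\not\sim\theta\}$. In particular, if $\beta(V,\alpha)<1$, then the expected total number of descendants of a finite cycle $\gamma$ in the multitype branching process with mean matrix $m$ is finite.
   Context: Fix $\alpha>0$ and a strictly convex potential $V:\mathbb{Z}^d\to\mathbb{R}^+\cup\{+\infty\}$ with $V(\vec0)=0$. $\Gamma$ is the set of finite cycles of $\mathbb{Z}^d$: a cycle of length $|\gamma|=n\ge2$ on distinct sites $x_1,\dots,x_n$ maps $x_i\mapsto x_{i+1}$ (mod $n$) and fixes other sites, with support $\{\gamma\}=\{x_1,\dots,x_n\}$. $\gamma\not\sim\theta$ means $\{\gamma\}\cap\{\theta\}\neq\emptyset$. $w(\gamma)=\exp\{-\alpha\sum_{x\in\{\gamma\}}V(\gamma(x)-x)\}$ and $\beta(V,\alpha)=\sum_{\theta\in\Gamma,\ \vec0\in\{\theta\}}|\theta|\,w(\theta)$. The $m^n(\gamma,\theta)=\sum_{\gamma_1,\dots,\gamma_{n-1}}m(\gamma,\gamma_1)m(\gamma_1,\gamma_2)\cdots m(\gamma_{n-1},\theta)$ is the mean number of type-$\theta$ individuals in generation $n$ of the multitype branching process started from one individual of type $\gamma$. *)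

theory Defs
  imports "HOL-Analysis.Analysis" "HOL-Combinatorics.Cycles"
begin

type_synonym 'd site = "int ^ 'd"

definition to_real :: "'d::finite site \<Rightarrow> real ^ 'd" where
  "to_real x = (\<chi> i. real_of_int (x $ i))"

definition strictly_convex_pot :: "('d::finite site \<Rightarrow> ennreal) \<Rightarrow> bool" where
  "strictly_convex_pot V \<longleftrightarrow>
     (\<exists>f :: real ^ 'd \<Rightarrow> ennreal. (\<forall>x. f (to_real x) = V x) \<and>
        (\<forall>x y t. x \<noteq> y \<longrightarrow> 0 < t \<longrightarrow> t < 1 \<longrightarrow> f x < top \<longrightarrow> f y < top \<longrightarrow>
            f (t *\<^sub>R x + (1 - t) *\<^sub>R y) < ennreal t * f x + ennreal (1 - t) * f y))"

definition Cyc :: "('d::finite site \<Rightarrow> 'd site) set" where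
  "Cyc = {g. \<exists>cs. distinct cs \<and> length cs \<ge> 2 \<and> g = cycle_of_list cs}"

definition supp :: "('d::finite site \<Rightarrow> 'd site) \<Rightarrow> 'd site set" where
  "supp g = {x. g x \<noteq> x}"

definition len :: "('d::finite site \<Rightarrow> 'd site) \<Rightarrow> nat" where
  "len g = card (supp g)"

definition wt :: "real \<Rightarrow> ('d::finite site \<Rightarrow> ennreal) \<Rightarrow> ('d site \<Rightarrow> 'd site) \<Rightarrow> ennreal" where
  "wt \<alpha> V g = (let s = (\<Sum>x\<in>supp g. V (g x - x)) in
                 if s = top then 0 else ennreal (exp (- \<alpha> * enn2real s)))"

definition beta :: "('d::finite site \<Rightarrow> ennreal) \<Rightarrow> real \<Rightarrow> ennreal" where
  "beta V \<alpha> = (\<Sum>\<^sub>\<infinity>\<theta>\<in>{\<theta>\<in>Cyc. 0 \<in> supp \<theta>}. of_nat (len \<theta>) * wt \<alpha> V \<theta>)"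

text \<open>Mean matrix m(g,th) = w(th) * 1{supports intersect}.\<close>
definition mmat :: "real \<Rightarrow> ('d::finite site \<Rightarrow> ennreal) \<Rightarrow> ('d site \<Rightarrow> 'd site) \<Rightarrow> ('d site \<Rightarrow> 'd site) \<Rightarrow> ennreal" where
  "mmat \<alpha> V g \<theta> = (if supp g \<inter> supp \<theta> \<noteq> {} then wt \<alpha> V \<theta> else 0)"

text \<open>Matrix powers m^n (n >= 1) indexed by Gamma; mpow n = m^(n+1).\<close>
fun mpow :: "real \<Rightarrow> ('d::finite site \<Rightarrow> ennreal) \<Rightarrow> nat \<Rightarrow> ('d site \<Rightarrow> 'd site) \<Rightarrow> ('d site \<Rightarrow> 'd site) \<Rightarrow> ennreal" where
  "mpow \<alpha> V 0 g \<theta> = mmat \<alpha> V g \<theta>"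
| "mpow \<alpha> V (Suc n) g \<theta> = (\<Sum>\<^sub>\<infinity>\<eta>\<in>Cyc. mpow \<alpha> V n g \<eta> * mmat \<alpha> V \<eta> \<theta>)"

end

theory Submission
  imports Defs
begin

lemma enn_infsum_cmult: "(\<Sum>\<^sub>\<infinity>x\<in>A. c * f x) = c * (\<Sum>\<^sub>\<infinity>x\<in>A. (f x :: ennreal))"
  by (simp add: nonneg_infsum_complete SUP_mult_left_ennreal sum_distrib_left)

lemma enn_infsum_multc: "(\<Sum>\<^sub>\<infinity>x\<in>A. f x * c) = (\<Sum>\<^sub>\<infinity>x\<in>A. (f x :: ennreal)) * c"
  using enn_infsum_cmult[of c f A] by (simp add: mult.commute)

lemma enn_infsum_sum:
  assumes "finite I"
  shows "(\<Sum>\<^sub>\<infinity>x\<in>A. \<Sum>i\<in>I. f i x) = (\<Sum>i\<in>I. \<Sum>\<^sub>\<infinity>x\<in>A. (f i x :: ennreal))"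
  using assms
proof (induction I rule: finite_induct)
  case empty then show ?case by simp
next
  case (insert a I)
  then show ?case by (simp add: infsum_add[OF nonneg_summable_on_complete nonneg_summable_on_complete])
qed

lemma enn_sum_le_infsum:
  assumes "finite F" "F \<subseteq> A"
  shows "sum f F \<le> (\<Sum>\<^sub>\<infinity>x\<in>A. (f x :: ennreal))"
proof -
  have "infsum f F \<le> infsum f A"
    by (rule infsum_mono_neutral) (use assms in \<open>auto intro: nonneg_summable_on_complete\<close>)
  then show ?thesis using assms by simp
qed

lemma enn_infsum_swap_le:
  "(\<Sum>\<^sub>\<infinity>a\<in>A. \<Sum>\<^sub>\<infinity>b\<in>B. f a b) \<le> (\<Sum>\<^sub>\<infinity>b\<in>B. \<Sum>\<^sub>\<infinity>a\<in>A. (f a b :: ennreal))"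
proof (rule infsum_le_finite_sums)
  show "(\<lambda>a. \<Sum>\<^sub>\<infinity>b\<in>B. f a b) summable_on A" by (rule nonneg_summable_on_complete) simp
  fix F assume F: "finite F" "F \<subseteq> A"
  have "(\<Sum>a\<in>F. \<Sum>\<^sub>\<infinity>b\<in>B. f a b) = (\<Sum>\<^sub>\<infinity>b\<in>B. \<Sum>a\<in>F. f a b)"
    using enn_infsum_sum[OF F(1), where A=B and f="\<lambda>a b. f a b"] by simp
  also have "\<dots> \<le> (\<Sum>\<^sub>\<infinity>b\<in>B. \<Sum>\<^sub>\<infinity>a\<in>A. f a b)"
    by (rule infsum_mono) (auto intro: enn_sum_le_infsum[OF F] nonneg_summable_on_complete)
  finally show "(\<Sum>a\<in>F. \<Sum>\<^sub>\<infinity>b\<in>B. f a b) \<le> (\<Sum>\<^sub>\<infinity>b\<in>B. \<Sum>\<^sub>\<infinity>a\<in>A. f a b)" .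
qed

lemma Cyc_finite_supp:
  assumes "\<theta> \<in> Cyc" shows "finite (supp \<theta>)"
proof -
  obtain cs where cs: "distinct cs" "length cs \<ge> 2" "\<theta> = cycle_of_list cs"
    using assms unfolding Cyc_def by blast
  have "supp \<theta> \<subseteq> set cs" using cs(3) id_outside_supp unfolding supp_def by fastforce
  then show ?thesis using finite_subset by blast
qed

lemma Cyc_len_pos:
  assumes "\<theta> \<in> Cyc" shows "len \<theta> \<ge> 1"
proof -
  obtain cs where cs: "distinct cs" "length cs \<ge> 2" "\<theta> = cycle_of_list cs"
    using assms unfolding Cyc_def by blast
  then obtain a b r where abr: "cs = a # b # r"
    by (metis One_nat_def Suc_1 Suc_le_length_iff)
  have "map \<theta> cs = rotate1 cs" using cyclic_rotation[OF cs(1), of 1] cs(3) by simp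
  then have "\<theta> a = b" using abr by simp
  moreover have "a \<noteq> b" using cs(1) abr by auto
  ultimately have "a \<in> supp \<theta>" unfolding supp_def by simp
  then show ?thesis using Cyc_finite_supp[OF assms] unfolding len_def
    by (metis One_nat_def Suc_leI card_gt_0_iff empty_iff)
qed

definition shft :: "'d::finite site \<Rightarrow> ('d site \<Rightarrow> 'd site) \<Rightarrow> ('d site \<Rightarrow> 'd site)" where
  "shft x \<theta> = (\<lambda>y. \<theta> (y - x) + x)"

lemma shft_Cyc:
  assumes "\<theta> \<in> Cyc" shows "shft x \<theta> \<in> Cyc"
proof -
  obtain cs where cs: "distinct cs" "length cs \<ge> 2" "\<theta> = cycle_of_list cs"
    using assms unfolding Cyc_def by blast
  define p where "p = (\<lambda>y. y + x)"
  have bp: "bij p" unfolding p_def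
    by (rule bij_betw_byWitness[where f'="\<lambda>y. y - x"]) auto
  have ip: "inv p = (\<lambda>y. y - x)"
    unfolding p_def by (rule inv_equality) auto
  have "p \<circ> cycle_of_list cs \<circ> inv p = cycle_of_list (map p cs)"
    by (rule conjugation_of_cycle[OF cs(1) bp])
  then have "shft x \<theta> = cycle_of_list (map p cs)"
    using cs(3) ip unfolding shft_def p_def by (simp add: o_def)
  moreover have "distinct (map p cs)" using cs(1) bp
    by (simp add: distinct_map bij_is_inj inj_on_subset[OF bij_is_inj[OF bp]])
  ultimately show ?thesis using cs(2) unfolding Cyc_def by auto
qed

lemma shft_shft: "shft (-x) (shft x \<theta>) = \<theta>"
  unfolding shft_def by auto

lemma supp_shft: "supp (shft x \<theta>) = (\<lambda>y. y + x) ` supp \<theta>"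
proof -
  have "supp (shft x \<theta>) = {y. \<theta> (y - x) \<noteq> y - x}"
    unfolding supp_def shft_def by (auto simp: algebra_simps)
  also have "\<dots> = (\<lambda>y. y + x) ` supp \<theta>"
    unfolding supp_def by (auto simp: image_iff intro!: exI[where x="_ - x"])
  finally show ?thesis .
qed

lemma len_wt_shft: "len (shft x \<theta>) = len \<theta>" "wt \<alpha> V (shft x \<theta>) = wt \<alpha> V \<theta>"
proof -
  have inj: "inj_on (\<lambda>y. y + x) S" for S by (auto simp: inj_on_def)
  show "len (shft x \<theta>) = len \<theta>" unfolding len_def supp_shft
    by (rule card_image[OF inj])
  have "(\<Sum>y\<in>supp (shft x \<theta>). V (shft x \<theta> y - y)) = (\<Sum>z\<in>supp \<theta>. V (\<theta> z - z))"
    unfolding supp_shft by (subst sum.reindex[OF inj]) (simp add: shft_def)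
  then show "wt \<alpha> V (shft x \<theta>) = wt \<alpha> V \<theta>" unfolding wt_def by simp
qed

lemma beta_shift:
  "(\<Sum>\<^sub>\<infinity>\<theta>\<in>{\<theta>\<in>Cyc. x \<in> supp \<theta>}. of_nat (len \<theta>) * wt \<alpha> V \<theta>) = beta V \<alpha>"
proof -
  have bij: "bij_betw (shft x) {\<theta>\<in>Cyc. 0 \<in> supp \<theta>} {\<theta>\<in>Cyc. x \<in> supp \<theta>}"
  proof (rule bij_betw_byWitness[where f'="shft (-x)"])
    show "\<forall>a\<in>{\<theta> \<in> Cyc. 0 \<in> supp \<theta>}. shft (- x) (shft x a) = a" by (simp add: shft_shft)
    show "\<forall>a\<in>{\<theta> \<in> Cyc. x \<in> supp \<theta>}. shft x (shft (- x) a) = a"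
      using shft_shft[of "-x"] by simp
    show "shft x ` {\<theta> \<in> Cyc. 0 \<in> supp \<theta>} \<subseteq> {\<theta> \<in> Cyc. x \<in> supp \<theta>}"
      by (auto simp: shft_Cyc supp_shft)
    show "shft (- x) ` {\<theta> \<in> Cyc. x \<in> supp \<theta>} \<subseteq> {\<theta> \<in> Cyc. 0 \<in> supp \<theta>}"
      by (auto simp: shft_Cyc supp_shft image_iff intro!: bexI[where x=x])
  qed
  have "(\<Sum>\<^sub>\<infinity>\<theta>\<in>{\<theta>\<in>Cyc. 0 \<in> supp \<theta>}. of_nat (len (shft x \<theta>)) * wt \<alpha> V (shft x \<theta>))
     = (\<Sum>\<^sub>\<infinity>\<theta>\<in>{\<theta>\<in>Cyc. x \<in> supp \<theta>}. of_nat (len \<theta>) * wt \<alpha> V \<theta>)"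
    by (rule infsum_reindex_bij_betw[OF bij])
  then show ?thesis unfolding beta_def by (simp add: len_wt_shft)
qed

lemma W_bound:
  fixes \<eta> :: "'d::finite site \<Rightarrow> 'd site"
  assumes "\<eta> \<in> Cyc"
  shows "(\<Sum>\<^sub>\<infinity>\<theta>\<in>Cyc. mmat \<alpha> V \<eta> \<theta> * of_nat (len \<theta>)) \<le> of_nat (len \<eta>) * beta V \<alpha>"
proof -
  define g :: "'d site \<Rightarrow> ('d site \<Rightarrow> 'd site) \<Rightarrow> ennreal" where "g x \<theta> = (if x \<in> supp \<theta> then of_nat (len \<theta>) * wt \<alpha> V \<theta> else (0::ennreal))" for x \<theta>
  have fin: "finite (supp \<eta>)" by (rule Cyc_finite_supp[OF assms])
  have "(\<Sum>\<^sub>\<infinity>\<theta>\<in>Cyc. mmat \<alpha> V \<eta> \<theta> * of_nat (len \<theta>)) \<le> (\<Sum>\<^sub>\<infinity>\<theta>\<in>Cyc. \<Sum>x\<in>supp \<eta>. g x \<theta>)"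
  proof (rule infsum_mono[OF nonneg_summable_on_complete nonneg_summable_on_complete])
    fix \<theta> :: "'d site \<Rightarrow> 'd site" assume "\<theta> \<in> Cyc"
    show "mmat \<alpha> V \<eta> \<theta> * of_nat (len \<theta>) \<le> (\<Sum>x\<in>supp \<eta>. g x \<theta>)"
    proof (cases "supp \<eta> \<inter> supp \<theta> = {}")
      case True then show ?thesis by (simp add: mmat_def)
    next
      case False
      then obtain x where x: "x \<in> supp \<eta>" "x \<in> supp \<theta>" by blast
      have "mmat \<alpha> V \<eta> \<theta> * of_nat (len \<theta>) = g x \<theta>"
        using False x by (simp add: mmat_def g_def mult.commute)
      also have "\<dots> \<le> (\<Sum>x\<in>supp \<eta>. g x \<theta>)"
        by (rule member_le_sum[OF x(1)]) (use fin in auto)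
      finally show ?thesis .
    qed
  qed auto
  also have "\<dots> = (\<Sum>x\<in>supp \<eta>. \<Sum>\<^sub>\<infinity>\<theta>\<in>Cyc. g x \<theta>)"
    by (rule enn_infsum_sum[OF fin])
  also have "\<dots> \<le> (\<Sum>x\<in>supp \<eta>. beta V \<alpha>)"
  proof (rule sum_mono)
    fix x :: "'d site"
    have "(\<Sum>\<^sub>\<infinity>\<theta>\<in>Cyc. g x \<theta>) \<le> (\<Sum>\<^sub>\<infinity>\<theta>\<in>{\<theta>\<in>Cyc. x \<in> supp \<theta>}. of_nat (len \<theta>) * wt \<alpha> V \<theta>)"
      by (rule infsum_mono_neutral[OF nonneg_summable_on_complete nonneg_summable_on_complete])
         (auto simp: g_def)
    then show "(\<Sum>\<^sub>\<infinity>\<theta>\<in>Cyc. g x \<theta>) \<le> beta V \<alpha>" by (simp add: beta_shift)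
  qed
  also have "\<dots> = of_nat (len \<eta>) * beta V \<alpha>" by (simp add: len_def)
  finally show ?thesis .
qed

lemma S_bound:
  fixes \<gamma> :: "'d::finite site \<Rightarrow> 'd site"
  assumes "\<gamma> \<in> Cyc"
  shows "(\<Sum>\<^sub>\<infinity>\<theta>\<in>Cyc. mpow \<alpha> V n \<gamma> \<theta> * of_nat (len \<theta>)) \<le> of_nat (len \<gamma>) * beta V \<alpha> ^ Suc n"
proof (induction n)
  case 0
  then show ?case using W_bound[OF assms] by simp
next
  case (Suc n)
  have "(\<Sum>\<^sub>\<infinity>\<theta>\<in>Cyc. mpow \<alpha> V (Suc n) \<gamma> \<theta> * of_nat (len \<theta>))
      = (\<Sum>\<^sub>\<infinity>\<theta>\<in>Cyc. \<Sum>\<^sub>\<infinity>\<eta>\<in>Cyc. mpow \<alpha> V n \<gamma> \<eta> * (mmat \<alpha> V \<eta> \<theta> * of_nat (len \<theta>)))"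
    by (simp add: enn_infsum_multc[symmetric] mult.assoc)
  also have "\<dots> \<le> (\<Sum>\<^sub>\<infinity>\<eta>\<in>Cyc. \<Sum>\<^sub>\<infinity>\<theta>\<in>Cyc. mpow \<alpha> V n \<gamma> \<eta> * (mmat \<alpha> V \<eta> \<theta> * of_nat (len \<theta>)))"
    by (rule enn_infsum_swap_le)
  also have "\<dots> = (\<Sum>\<^sub>\<infinity>\<eta>\<in>Cyc. mpow \<alpha> V n \<gamma> \<eta> * (\<Sum>\<^sub>\<infinity>\<theta>\<in>Cyc. mmat \<alpha> V \<eta> \<theta> * of_nat (len \<theta>)))"
    by (simp add: enn_infsum_cmult)
  also have "\<dots> \<le> (\<Sum>\<^sub>\<infinity>\<eta>\<in>Cyc. mpow \<alpha> V n \<gamma> \<eta> * (of_nat (len \<eta>) * beta V \<alpha>))"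
    by (rule infsum_mono[OF nonneg_summable_on_complete nonneg_summable_on_complete])
       (auto intro: mult_left_mono W_bound)
  also have "\<dots> = (\<Sum>\<^sub>\<infinity>\<eta>\<in>Cyc. mpow \<alpha> V n \<gamma> \<eta> * of_nat (len \<eta>)) * beta V \<alpha>"
    by (simp add: enn_infsum_multc[symmetric] mult.assoc)
  also have "\<dots> \<le> of_nat (len \<gamma>) * beta V \<alpha> ^ Suc n * beta V \<alpha>"
    by (rule mult_right_mono[OF Suc.IH]) simp
  also have "\<dots> = of_nat (len \<gamma>) * beta V \<alpha> ^ Suc (Suc n)"
    by (simp add: ac_simps)
  finally show ?case .
qed

theorem lemma3p6:
  fixes V :: "int ^ 'd::finite \<Rightarrow> ennreal" and \<alpha> :: real and \<gamma> :: "int ^ 'd \<Rightarrow> int ^ 'd"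
  assumes "\<alpha> > 0" and "strictly_convex_pot V" and "V 0 = 0" and "\<gamma> \<in> Cyc"
  shows "(\<Sum>n. \<Sum>\<^sub>\<infinity>\<theta>\<in>Cyc. mpow \<alpha> V n \<gamma> \<theta>) \<le> (\<Sum>n. of_nat (len \<gamma>) * beta V \<alpha> ^ Suc n)
         \<and> (beta V \<alpha> < 1 \<longrightarrow> (\<Sum>n. \<Sum>\<^sub>\<infinity>\<theta>\<in>Cyc. mpow \<alpha> V n \<gamma> \<theta>) < top)"
proof -
  have pt: "(\<Sum>\<^sub>\<infinity>\<theta>\<in>Cyc. mpow \<alpha> V n \<gamma> \<theta>) \<le> of_nat (len \<gamma>) * beta V \<alpha> ^ Suc n" for n
  proof -
    have "(\<Sum>\<^sub>\<infinity>\<theta>\<in>Cyc. mpow \<alpha> V n \<gamma> \<theta>) \<le> (\<Sum>\<^sub>\<infinity>\<theta>\<in>Cyc. mpow \<alpha> V n \<gamma> \<theta> * of_nat (len \<theta>))"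
    proof (rule infsum_mono[OF nonneg_summable_on_complete nonneg_summable_on_complete])
      fix \<theta> :: "'d site \<Rightarrow> 'd site" assume "\<theta> \<in> Cyc"
      then have "(1::ennreal) \<le> of_nat (len \<theta>)" using Cyc_len_pos by simp
      then show "mpow \<alpha> V n \<gamma> \<theta> \<le> mpow \<alpha> V n \<gamma> \<theta> * of_nat (len \<theta>)"
        using mult_left_mono[of 1 "of_nat (len \<theta>)" "mpow \<alpha> V n \<gamma> \<theta>"] by simp
    qed auto
    also have "\<dots> \<le> of_nat (len \<gamma>) * beta V \<alpha> ^ Suc n" by (rule S_bound[OF assms(4)])
    finally show ?thesis .
  qed
  have A: "(\<Sum>n. \<Sum>\<^sub>\<infinity>\<theta>\<in>Cyc. mpow \<alpha> V n \<gamma> \<theta>) \<le> (\<Sum>n. of_nat (len \<gamma>) * beta V \<alpha> ^ Suc n)"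
    by (rule suminf_le[OF pt]) auto
  have B: "(\<Sum>n. of_nat (len \<gamma>) * beta V \<alpha> ^ Suc n) < top" if lt: "beta V \<alpha> < 1"
  proof -
    obtain b where b: "beta V \<alpha> = ennreal b" "0 \<le> b" "b < 1"
      using lt by (cases "beta V \<alpha>") (auto simp: ennreal_less_iff)
    have eq: "of_nat (len \<gamma>) * beta V \<alpha> ^ Suc n = ennreal (real (len \<gamma>) * b ^ Suc n)" for n
      using b by (simp add: ennreal_mult ennreal_power ennreal_of_nat_eq_real_of_nat)
    have sm: "summable (\<lambda>n. real (len \<gamma>) * b ^ Suc n)"
      using b by (intro summable_mult) (simp add: summable_geometric)
    have "(\<Sum>n. of_nat (len \<gamma>) * beta V \<alpha> ^ Suc n) = ennreal (\<Sum>n. real (len \<gamma>) * b ^ Suc n)"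
      unfolding eq using b by (intro suminf_ennreal2 sm) simp
    then show ?thesis by simp
  qed
  show ?thesis using A B by (meson le_less_trans)
qed

end
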